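(* Fix $I_{ij},I_{jk},I_{ki}\in[0,\infty)$. Define $\rho_H:\mathbb{R}^3_{>0}\to\mathbb{R}^3_{>0}$ by $$\rho_H(r_i,r_j,r_k)=(l_{ij},l_{jk},l_{ki}),$$ where $l_{ij},l_{jk},l_{ki}>0$ are given by $$\cosh l_{ij}=\cosh r_i\cosh r_j+I_{ij}\sinh r_i\sinh r_j,$$ $$\cosh l_{jk}=\cosh r_j\cosh r_k+I_{jk}\sinh r_j\sinh r_k,$$ $$\cosh l_{ki}=\cosh r_k\cosh r_i+I_{ki}\sinh r_k\sinh r_i.$$ Then $\rho_H$ is injective, and it is a smooth embedding. Equivalently, for a fixed hyperbolic triangle there is at most one configuration of three circles, centered at its vertices, whose pairwise inversive distances are $I_{ij},I_{jk},I_{ki}$.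
   Context: The inversive distance of two hyperbolic circles of radii $r_1,r_2$ whose centers are at distance $l$ is $$\frac{\cosh l-\cosh r_1\cosh r_2}{\sinh r_1\sinh r_2}.$$ *)

theory Defs
  imports "HOL-Analysis.Analysis"
begin

text \<open>Positive octant of R^3. Coordinates 1,2,3 correspond to i,j,k.\<close>
definition pos3 :: "(real^3) set" where
  "pos3 = {x. \<forall>i. 0 < x $ i}"

definition rhoH :: "real \<Rightarrow> real \<Rightarrow> real \<Rightarrow> real^3 \<Rightarrow> real^3" where
  "rhoH Iij Ijk Iki r = vector
     [arcosh (cosh (r$1) * cosh (r$2) + Iij * sinh (r$1) * sinh (r$2)),
      arcosh (cosh (r$2) * cosh (r$3) + Ijk * sinh (r$2) * sinh (r$3)),
      arcosh (cosh (r$3) * cosh (r$1) + Iki * sinh (r$3) * sinh (r$1))]"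

fun iter_dderiv :: "('a::real_normed_vector) list \<Rightarrow> ('a \<Rightarrow> 'b::real_normed_vector) \<Rightarrow> 'a \<Rightarrow> 'b" where
  "iter_dderiv [] f = f"
| "iter_dderiv (v # vs) f = (\<lambda>x. frechet_derivative (iter_dderiv vs f) (at x) v)"

definition smooth_on :: "'a set \<Rightarrow> ('a::real_normed_vector \<Rightarrow> 'b::real_normed_vector) \<Rightarrow> bool" where
  "smooth_on S f \<longleftrightarrow> (\<forall>vs. \<forall>x\<in>S. iter_dderiv vs f differentiable (at x))"

definition smooth_embedding :: "'a set \<Rightarrow> ('a::real_normed_vector \<Rightarrow> 'b::real_normed_vector) \<Rightarrow> bool" where
  "smooth_embedding S f \<longleftrightarrow> open S \<and> smooth_on S f \<and>
     (\<forall>x\<in>S. inj (frechet_derivative f (at x))) \<and>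
     (\<exists>g. homeomorphism S (f ` S) f g)"

end

theory Submission
  imports Defs
begin

datatype ex = Cst real | Vr 3 | Add ex ex | Mul ex ex | Ch ex | Sh ex | Iv ex | Sq ex | Ac ex

primrec ev :: "ex \<Rightarrow> real^3 \<Rightarrow> real" where
  "ev (Cst c) x = c"
| "ev (Vr i) x = x $ i"
| "ev (Add a b) x = ev a x + ev b x"
| "ev (Mul a b) x = ev a x * ev b x"
| "ev (Ch a) x = cosh (ev a x)"
| "ev (Sh a) x = sinh (ev a x)"
| "ev (Iv a) x = inverse (ev a x)"
| "ev (Sq a) x = sqrt (ev a x)"
| "ev (Ac a) x = arcosh (ev a x)"

primrec wd :: "ex \<Rightarrow> real^3 \<Rightarrow> bool" where
  "wd (Cst c) x = True"
| "wd (Vr i) x = True"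
| "wd (Add a b) x = (wd a x \<and> wd b x)"
| "wd (Mul a b) x = (wd a x \<and> wd b x)"
| "wd (Ch a) x = wd a x"
| "wd (Sh a) x = wd a x"
| "wd (Iv a) x = (wd a x \<and> ev a x \<noteq> 0)"
| "wd (Sq a) x = (wd a x \<and> ev a x > 0)"
| "wd (Ac a) x = (wd a x \<and> ev a x > 1)"

primrec dr :: "real^3 \<Rightarrow> ex \<Rightarrow> ex" where
  "dr v (Cst c) = Cst 0"
| "dr v (Vr i) = Cst (v $ i)"
| "dr v (Add a b) = Add (dr v a) (dr v b)"
| "dr v (Mul a b) = Add (Mul (dr v a) b) (Mul a (dr v b))"
| "dr v (Ch a) = Mul (Sh a) (dr v a)"
| "dr v (Sh a) = Mul (Ch a) (dr v a)"
| "dr v (Iv a) = Mul (Cst (-1)) (Mul (dr v a) (Mul (Iv a) (Iv a)))"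
| "dr v (Sq a) = Mul (dr v a) (Mul (Cst (1/2)) (Iv (Sq a)))"
| "dr v (Ac a) = Mul (dr v a) (Iv (Sq (Add (Mul a a) (Cst (-1)))))"

lemma wd_dr: "wd e x \<Longrightarrow> wd (dr v e) x"
proof (induction e)
  case (Ac a)
  then have "ev a x * ev a x > 1" by (simp add: less_1_mult)
  then show ?case using Ac by simp
qed auto

lemma chain_real:
  assumes "(f has_derivative f') (at x)" "(g has_real_derivative D) (at (f x))"
  shows "((\<lambda>y. g (f y)) has_derivative (\<lambda>v. f' v * D)) (at x)"
  using has_derivative_compose[OF assms(1) assms(2)[unfolded has_field_derivative_def]]
  by (simp add: mult.commute)

lemma dcosh: "(cosh has_real_derivative sinh x) (at x)"
  using has_field_derivative_cosh[OF DERIV_ident] by simp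
lemma dsinh: "(sinh has_real_derivative cosh x) (at x)"
  using has_field_derivative_sinh[OF DERIV_ident] by simp

lemma ev_eta:
  "ev (Mul a b) = (\<lambda>y. ev a y * ev b y)"
  "ev (Ch a) = (\<lambda>y. cosh (ev a y))"
  "ev (Sh a) = (\<lambda>y. sinh (ev a y))"
  "ev (Iv a) = (\<lambda>y. inverse (ev a y))"
  "ev (Sq a) = (\<lambda>y. sqrt (ev a y))"
  "ev (Ac a) = (\<lambda>y. arcosh (ev a y))"
  by (auto simp: fun_eq_iff)

lemma ev_deriv: "wd e x \<Longrightarrow> (ev e has_derivative (\<lambda>v. ev (dr v e) x)) (at x)"
proof (induction e)
  case (Cst c)
  then show ?case by (simp add: has_derivative_const)
next
  case (Vr i)
  then show ?case
    using bounded_linear.has_derivative[OF bounded_linear_vec_nth[of i] has_derivative_ident]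
    by simp
next
  case (Add a b)
  then show ?case by (simp add: has_derivative_add)
next
  case (Mul a b)
  then have "((\<lambda>y. ev a y * ev b y) has_derivative (\<lambda>h. ev a x * ev (dr h b) x + ev (dr h a) x * ev b x)) (at x)"
    by (intro has_derivative_mult) simp_all
  then show ?case unfolding ev_eta
    by (rule has_derivative_eq_rhs) (simp add: fun_eq_iff)
next
  case (Ch a)
  then have "((\<lambda>y. cosh (ev a y)) has_derivative (\<lambda>v. ev (dr v a) x * sinh (ev a x))) (at x)"
    by (intro chain_real dcosh) simp
  then show ?case unfolding ev_eta
    by (rule has_derivative_eq_rhs) (simp add: fun_eq_iff)
next
  case (Sh a)
  then have "((\<lambda>y. sinh (ev a y)) has_derivative (\<lambda>v. ev (dr v a) x * cosh (ev a x))) (at x)"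
    by (intro chain_real dsinh) simp
  then show ?case unfolding ev_eta
    by (rule has_derivative_eq_rhs) (simp add: fun_eq_iff)
next
  case (Iv a)
  then have "((\<lambda>y. inverse (ev a y)) has_derivative (\<lambda>v. ev (dr v a) x * (- (inverse (ev a x) ^ Suc (Suc 0))))) (at x)"
    by (intro chain_real[where g=inverse, OF _ DERIV_inverse]) simp_all
  then show ?case unfolding ev_eta
    by (rule has_derivative_eq_rhs) (simp add: fun_eq_iff power2_eq_square)
next
  case (Sq a)
  then have "((\<lambda>y. sqrt (ev a y)) has_derivative (\<lambda>v. ev (dr v a) x * (inverse (sqrt (ev a x)) / 2))) (at x)"
    by (intro chain_real[where g=sqrt, OF _ DERIV_real_sqrt]) simp_all
  then show ?case unfolding ev_eta
    by (rule has_derivative_eq_rhs) (simp add: fun_eq_iff)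
next
  case (Ac a)
  then have "((\<lambda>y. arcosh (ev a y)) has_derivative (\<lambda>v. ev (dr v a) x * (1 / (sqrt (ev a x ^ 2 - 1))))) (at x)"
    by (intro chain_real[where g=arcosh, OF _ arcosh_real_has_field_derivative]) simp_all
  then show ?case unfolding ev_eta
    by (rule has_derivative_eq_rhs) (simp add: fun_eq_iff power2_eq_square divide_inverse)
qed


definition fv :: "ex \<Rightarrow> ex \<Rightarrow> ex \<Rightarrow> real^3 \<Rightarrow> real^3" where
  "fv a b c x = vector [ev a x, ev b x, ev c x]"

lemma vec3: "(vector [p, q, r] :: real^3) = p *\<^sub>R axis 1 1 + q *\<^sub>R axis 2 1 + r *\<^sub>R axis 3 1"
  by (simp add: vec_eq_iff forall_3 axis_def)

lemma fv_deriv: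
  assumes "wd a x" "wd b x" "wd c x"
  shows "(fv a b c has_derivative (\<lambda>v. fv (dr v a) (dr v b) (dr v c) x)) (at x)"
proof -
  have "((\<lambda>y. ev a y *\<^sub>R axis 1 1 + ev b y *\<^sub>R axis 2 1 + ev c y *\<^sub>R axis 3 (1::real)) has_derivative
     (\<lambda>v. ev (dr v a) x *\<^sub>R axis 1 1 + ev (dr v b) x *\<^sub>R axis 2 1 + ev (dr v c) x *\<^sub>R axis 3 (1::real))) (at x)"
    by (intro has_derivative_add bounded_linear.has_derivative[OF bounded_linear_scaleR_left] ev_deriv assms)
  then show ?thesis unfolding fv_def vec3 .
qed

primrec drs :: "(real^3) list \<Rightarrow> ex \<Rightarrow> ex" where
  "drs [] e = e"
| "drs (v # vs) e = dr v (drs vs e)"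

lemma wd_drs: "wd e x \<Longrightarrow> wd (drs vs e) x"
  by (induction vs) (auto intro: wd_dr)

lemma iter_fv:
  assumes S: "open S" and W: "\<forall>x\<in>S. wd a x \<and> wd b x \<and> wd c x"
  shows "\<forall>x\<in>S. iter_dderiv vs (fv a b c) x = fv (drs vs a) (drs vs b) (drs vs c) x"
proof (induction vs)
  case Nil
  then show ?case by simp
next
  case (Cons v vs)
  show ?case
  proof
    fix x assume x: "x \<in> S"
    have D: "(fv (drs vs a) (drs vs b) (drs vs c) has_derivative
       (\<lambda>v. fv (dr v (drs vs a)) (dr v (drs vs b)) (dr v (drs vs c)) x)) (at x)"
      using W x by (intro fv_deriv wd_drs) auto
    have "(iter_dderiv vs (fv a b c) has_derivative
       (\<lambda>v. fv (dr v (drs vs a)) (dr v (drs vs b)) (dr v (drs vs c)) x)) (at x)"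
      by (rule has_derivative_transform_within_open[OF D S x]) (use Cons in simp)
    from frechet_derivative_at[OF this] show "iter_dderiv (v # vs) (fv a b c) x = fv (drs (v # vs) a) (drs (v # vs) b) (drs (v # vs) c) x"
      by (simp add: fun_eq_iff)
  qed
qed

lemma smooth_fv:
  assumes S: "open S" and W: "\<forall>x\<in>S. wd a x \<and> wd b x \<and> wd c x"
  shows "smooth_on S (fv a b c)"
  unfolding smooth_on_def
proof (intro allI ballI)
  fix vs x assume x: "x \<in> S"
  have D: "(fv (drs vs a) (drs vs b) (drs vs c) has_derivative
       (\<lambda>v. fv (dr v (drs vs a)) (dr v (drs vs b)) (dr v (drs vs c)) x)) (at x)"
    using W x by (intro fv_deriv wd_drs) auto
  have "(iter_dderiv vs (fv a b c) has_derivative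
       (\<lambda>v. fv (dr v (drs vs a)) (dr v (drs vs b)) (dr v (drs vs c)) x)) (at x)"
    by (rule has_derivative_transform_within_open[OF D S x]) (use iter_fv[OF S W] in simp)
  then show "iter_dderiv vs (fv a b c) differentiable at x"
    unfolding differentiable_def by blast
qed

definition E :: "real \<Rightarrow> 3 \<Rightarrow> 3 \<Rightarrow> ex" where
  "E c i j = Ac (Add (Mul (Ch (Vr i)) (Ch (Vr j))) (Mul (Mul (Cst c) (Sh (Vr i))) (Sh (Vr j))))"

lemma rhoH_fv: "rhoH I J K = fv (E I 1 2) (E J 2 3) (E K 3 1)"
  by (simp add: fun_eq_iff rhoH_def fv_def E_def)

lemma F_gt1:
  fixes a b c :: real
  assumes "0 < a" "0 < b" "0 \<le> c"
  shows "1 < cosh a * cosh b + c * sinh a * sinh b"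
proof -
  have "1 < cosh a" "1 < cosh b" using assms cosh_real_ge_1[of a] cosh_real_ge_1[of b]
    by (auto simp: order_le_less)
  then have "1 < cosh a * cosh b" by (simp add: less_1_mult)
  moreover have "0 \<le> c * sinh a * sinh b" using assms by simp
  ultimately show ?thesis by linarith
qed

lemma wd_E: "x \<in> pos3 \<Longrightarrow> 0 \<le> c \<Longrightarrow> wd (E c i j) x"
  by (simp add: E_def pos3_def F_gt1)

lemma dE: "ev (dr v (E c i j)) x =
   ((sinh (x$i) * cosh (x$j) + c * cosh (x$i) * sinh (x$j)) * v$i
   + (cosh (x$i) * sinh (x$j) + c * sinh (x$i) * cosh (x$j)) * v$j)
   * inverse (sqrt ((cosh (x$i) * cosh (x$j) + c * sinh (x$i) * sinh (x$j)) *
        (cosh (x$i) * cosh (x$j) + c * sinh (x$i) * sinh (x$j)) + - 1))"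
  by (simp add: E_def algebra_simps)


lemma sgn2:
  fixes a b p q :: real
  assumes "0 < p" "0 < q" "q * b = - (p * a)"
  shows "(0 < a \<longleftrightarrow> b < 0) \<and> (a < 0 \<longleftrightarrow> 0 < b)"
proof -
  obtain k where k: "b = - (k * a)" "0 < k"
  proof
    show "b = - (p / q * a)" using assms by (simp add: field_simps)
    show "0 < p / q" using assms by simp
  qed
  then show ?thesis by (auto simp: zero_less_mult_iff mult_less_0_iff)
qed

lemma sign3:
  fixes a b c p1 q1 p2 q2 p3 q3 :: real
  assumes pos: "0 < p1" "0 < q1" "0 < p2" "0 < q2" "0 < p3" "0 < q3"
    and e: "p1 * a + q1 * b = 0" "p2 * b + q2 * c = 0" "p3 * c + q3 * a = 0"
  shows "a = 0 \<and> b = 0 \<and> c = 0"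
proof -
  have s1: "0 < a \<longleftrightarrow> b < 0" "a < 0 \<longleftrightarrow> 0 < b"
  proof -
    have "q1 * b = - (p1 * a)" using e by linarith
    then show "0 < a \<longleftrightarrow> b < 0" "a < 0 \<longleftrightarrow> 0 < b" using pos sgn2 by meson+
  qed
  have s2: "0 < b \<longleftrightarrow> c < 0" "b < 0 \<longleftrightarrow> 0 < c"
  proof -
    have "q2 * c = - (p2 * b)" using e by linarith
    then show "0 < b \<longleftrightarrow> c < 0" "b < 0 \<longleftrightarrow> 0 < c" using pos sgn2 by meson+
  qed
  have s3: "0 < c \<longleftrightarrow> a < 0" "c < 0 \<longleftrightarrow> 0 < a"
  proof -
    have "q3 * a = - (p3 * c)" using e by linarith
    then show "0 < c \<longleftrightarrow> a < 0" "c < 0 \<longleftrightarrow> 0 < a" using pos sgn2 by meson+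
  qed
  show ?thesis using s1 s2 s3 by linarith
qed

lemma Fmono:
  fixes a b a' b' c :: real
  assumes "0 \<le> a" "0 \<le> b" "a \<le> a'" "b \<le> b'" "a < a' \<or> b < b'" "0 \<le> c"
  shows "cosh a * cosh b + c * sinh a * sinh b < cosh a' * cosh b' + c * sinh a' * sinh b'"
proof -
  have ca: "cosh a \<le> cosh a'" "cosh b \<le> cosh b'" using assms by (simp_all add: cosh_real_nonneg_le_iff)
  have "cosh a * cosh b < cosh a' * cosh b'"
    using assms(5)
  proof
    assume "a < a'"
    then have "cosh a < cosh a'" using assms by (simp add: cosh_real_nonneg_less_iff)
    then have "cosh a * cosh b < cosh a' * cosh b" by simp
    also have "\<dots> \<le> cosh a' * cosh b'" using ca by simp
    finally show ?thesis .
  next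
    assume "b < b'"
    then have "cosh b < cosh b'" using assms by (simp add: cosh_real_nonneg_less_iff)
    then have "cosh a * cosh b < cosh a * cosh b'" by simp
    also have "\<dots> \<le> cosh a' * cosh b'" using ca by simp
    finally show ?thesis .
  qed
  moreover have "sinh a * sinh b \<le> sinh a' * sinh b'"
    using assms by (intro mult_mono) auto
  then have "c * (sinh a * sinh b) \<le> c * (sinh a' * sinh b')"
    using assms by (intro mult_left_mono) auto
  ultimately show ?thesis by (simp add: mult.assoc)
qed

lemma edge:
  fixes a b a' b' c :: real
  assumes "0 \<le> a" "0 \<le> b" "0 \<le> a'" "0 \<le> b'" "0 \<le> c"
    and eq: "cosh a * cosh b + c * sinh a * sinh b = cosh a' * cosh b' + c * sinh a' * sinh b'"
  shows "(a = a' \<and> b = b') \<or> (a < a' \<and> b' < b) \<or> (a' < a \<and> b < b')"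
proof (rule ccontr)
  assume "\<not> ?thesis"
  then have "(a \<le> a' \<and> b \<le> b' \<and> (a < a' \<or> b < b')) \<or> (a' \<le> a \<and> b' \<le> b \<and> (a' < a \<or> b' < b))"
    by linarith
  then show False
  proof
    assume "a \<le> a' \<and> b \<le> b' \<and> (a < a' \<or> b < b')"
    with Fmono[of a b a' b' c] assms show False by auto
  next
    assume "a' \<le> a \<and> b' \<le> b \<and> (a' < a \<or> b' < b)"
    with Fmono[of a' b' a b c] assms show False by auto
  qed
qed


lemma PQpos:
  fixes a b c :: real
  assumes "0 < a" "0 < b" "0 \<le> c"
  shows "0 < sinh a * cosh b + c * cosh a * sinh b" "0 < cosh a * sinh b + c * sinh a * cosh b"
proof -
  have "0 \<le> c * cosh a * sinh b" "0 \<le> c * sinh a * cosh b" using assms by simp_all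
  moreover have "0 < sinh a * cosh b" "0 < cosh a * sinh b" using assms by simp_all
  ultimately show "0 < sinh a * cosh b + c * cosh a * sinh b" "0 < cosh a * sinh b + c * sinh a * cosh b"
    by linarith+
qed

lemma zero_factor:
  fixes X F :: real
  assumes "X * inverse (sqrt (F * F + - 1)) = 0" "1 < F"
  shows "X = 0"
proof -
  have "1 < F * F" using assms(2) by (simp add: less_1_mult)
  then show ?thesis using assms(1) by simp
qed

lemma arc_inj: "1 \<le> (a::real) \<Longrightarrow> 1 \<le> b \<Longrightarrow> arcosh a = arcosh b \<Longrightarrow> a = b"
  by (metis cosh_arcosh_real)

lemma open_pos3: "open pos3"
proof -
  have "pos3 = {x. 0 < x$1} \<inter> {x. 0 < x$2} \<inter> {x::real^3. 0 < x$3}"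
    by (auto simp: pos3_def forall_3)
  moreover have "open {x::real^3. 0 < x$i}" for i
    by (intro open_Collect_less continuous_intros)
  ultimately show ?thesis by (metis open_Int)
qed

theorem mainTheorem7:
  fixes Iij Ijk Iki :: real
  assumes "0 \<le> Iij" and "0 \<le> Ijk" and "0 \<le> Iki"
  shows "rhoH Iij Ijk Iki ` pos3 \<subseteq> pos3
       \<and> inj_on (rhoH Iij Ijk Iki) pos3
       \<and> smooth_embedding pos3 (rhoH Iij Ijk Iki)"
proof -
  let ?r = "rhoH Iij Ijk Iki"
  have comp: "?r x $ 1 = arcosh (cosh (x$1) * cosh (x$2) + Iij * sinh (x$1) * sinh (x$2))"
     "?r x $ 2 = arcosh (cosh (x$2) * cosh (x$3) + Ijk * sinh (x$2) * sinh (x$3))"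
     "?r x $ 3 = arcosh (cosh (x$3) * cosh (x$1) + Iki * sinh (x$3) * sinh (x$1))" for x
    by (simp_all add: rhoH_def)
  have P: "0 < x$1" "0 < x$2" "0 < x$3" if "x \<in> pos3" for x
    using that by (auto simp: pos3_def)
  have img: "?r ` pos3 \<subseteq> pos3"
  proof
    fix y assume "y \<in> ?r ` pos3"
    then obtain x where x: "x \<in> pos3" "y = ?r x" by auto
    have "0 < y $ i" for i
      using exhaust_3[of i] F_gt1[OF P(1,2)[OF x(1)] assms(1)] F_gt1[OF P(2,3)[OF x(1)] assms(2)]
        F_gt1[OF P(3,1)[OF x(1)] assms(3)]
      by (auto simp: x(2) comp)
    then show "y \<in> pos3" by (simp add: pos3_def)
  qed
  have inj: "inj_on ?r pos3"
  proof (rule inj_onI)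
    fix x y assume x: "x \<in> pos3" and y: "y \<in> pos3" and eq: "?r x = ?r y"
    note Px = P[OF x] and Py = P[OF y]
    have "?r x $ 1 = ?r y $ 1" "?r x $ 2 = ?r y $ 2" "?r x $ 3 = ?r y $ 3" using eq by simp_all
    then have e1: "cosh (x$1) * cosh (x$2) + Iij * sinh (x$1) * sinh (x$2) = cosh (y$1) * cosh (y$2) + Iij * sinh (y$1) * sinh (y$2)"
      and e2: "cosh (x$2) * cosh (x$3) + Ijk * sinh (x$2) * sinh (x$3) = cosh (y$2) * cosh (y$3) + Ijk * sinh (y$2) * sinh (y$3)"
      and e3: "cosh (x$3) * cosh (x$1) + Iki * sinh (x$3) * sinh (x$1) = cosh (y$3) * cosh (y$1) + Iki * sinh (y$3) * sinh (y$1)"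
      unfolding comp
      using F_gt1[OF Px(1,2) assms(1)] F_gt1[OF Px(2,3) assms(2)] F_gt1[OF Px(3,1) assms(3)]
        F_gt1[OF Py(1,2) assms(1)] F_gt1[OF Py(2,3) assms(2)] F_gt1[OF Py(3,1) assms(3)]
      by (auto intro!: arc_inj)
    have d1: "(x$1 = y$1 \<and> x$2 = y$2) \<or> (x$1 < y$1 \<and> y$2 < x$2) \<or> (y$1 < x$1 \<and> x$2 < y$2)"
      using edge[OF _ _ _ _ assms(1) e1] Px Py by auto
    have d2: "(x$2 = y$2 \<and> x$3 = y$3) \<or> (x$2 < y$2 \<and> y$3 < x$3) \<or> (y$2 < x$2 \<and> x$3 < y$3)"
      using edge[OF _ _ _ _ assms(2) e2] Px Py by auto
    have d3: "(x$3 = y$3 \<and> x$1 = y$1) \<or> (x$3 < y$3 \<and> y$1 < x$1) \<or> (y$3 < x$3 \<and> x$1 < y$1)"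
      using edge[OF _ _ _ _ assms(3) e3] Px Py by auto
    have "x$1 = y$1 \<and> x$2 = y$2 \<and> x$3 = y$3" using d1 d2 d3 by linarith
    then show "x = y" by (simp add: vec_eq_iff forall_3)
  qed
  have W: "\<forall>x\<in>pos3. wd (E Iij 1 2) x \<and> wd (E Ijk 2 3) x \<and> wd (E Iki 3 1) x"
    using assms by (simp add: wd_E)
  have D: "(?r has_derivative (\<lambda>v. fv (dr v (E Iij 1 2)) (dr v (E Ijk 2 3)) (dr v (E Iki 3 1)) x)) (at x)"
    if "x \<in> pos3" for x
    unfolding rhoH_fv using W that by (intro fv_deriv) auto
  have smooth: "smooth_on pos3 ?r"
    unfolding rhoH_fv by (rule smooth_fv[OF open_pos3 W])
  have imm: "inj (frechet_derivative ?r (at x))" if x: "x \<in> pos3" for x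
  proof -
    let ?L = "\<lambda>v. fv (dr v (E Iij 1 2)) (dr v (E Ijk 2 3)) (dr v (E Iki 3 1)) x"
    have fe: "frechet_derivative ?r (at x) = ?L" using frechet_derivative_at[OF D[OF x]] by simp
    have lin: "linear ?L" using has_derivative_linear[OF D[OF x]] .
    note Px = P[OF x]
    have "v = 0" if L0: "?L v = 0" for v
    proof -
      have z: "ev (dr v (E Iij 1 2)) x = 0" "ev (dr v (E Ijk 2 3)) x = 0" "ev (dr v (E Iki 3 1)) x = 0"
        using arg_cong[OF L0, of "\<lambda>w. w $ 1"] arg_cong[OF L0, of "\<lambda>w. w $ 2"]
          arg_cong[OF L0, of "\<lambda>w. w $ 3"]
        by (simp_all add: fv_def)
      have z1: "(sinh (x$1) * cosh (x$2) + Iij * cosh (x$1) * sinh (x$2)) * v$1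
   + (cosh (x$1) * sinh (x$2) + Iij * sinh (x$1) * cosh (x$2)) * v$2 = 0"
        using zero_factor[OF z(1)[unfolded dE] F_gt1[OF Px(1,2) assms(1)]] .
      have z2: "(sinh (x$2) * cosh (x$3) + Ijk * cosh (x$2) * sinh (x$3)) * v$2
   + (cosh (x$2) * sinh (x$3) + Ijk * sinh (x$2) * cosh (x$3)) * v$3 = 0"
        using zero_factor[OF z(2)[unfolded dE] F_gt1[OF Px(2,3) assms(2)]] .
      have z3: "(sinh (x$3) * cosh (x$1) + Iki * cosh (x$3) * sinh (x$1)) * v$3
   + (cosh (x$3) * sinh (x$1) + Iki * sinh (x$3) * cosh (x$1)) * v$1 = 0"
        using zero_factor[OF z(3)[unfolded dE] F_gt1[OF Px(3,1) assms(3)]] .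
      have "v$1 = 0 \<and> v$2 = 0 \<and> v$3 = 0"
        by (rule sign3[OF PQpos[OF Px(1,2) assms(1)] PQpos[OF Px(2,3) assms(2)]
              PQpos[OF Px(3,1) assms(3)] z1 z2 z3])
      then show "v = 0" by (simp add: vec_eq_iff forall_3)
    qed
    then show ?thesis unfolding fe linear_injective_0[OF lin] by blast
  qed
  have cont: "continuous_on pos3 ?r"
    by (rule continuous_at_imp_continuous_on) (use D has_derivative_continuous in blast)
  obtain g where "homeomorphism pos3 (?r ` pos3) ?r g"
    using invariance_of_domain_homeomorphism[OF open_pos3 cont _ inj] by auto
  then have "smooth_embedding pos3 ?r"
    unfolding smooth_embedding_def using open_pos3 smooth imm by blast
  then show ?thesis using img inj by blast
qed

end
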